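(* Let $\mathcal{X}=\{\boldsymbol{x}_j\}_{j=1}^{N}$ be a finite dataset with ground-truth partition $\mathcal{S}^*=\{\mathcal{S}_k^*\}_{k=1}^K$, let $\omega>0$, and let $\mathcal{C}$ be the set of all pairwise constraints derived from $\mathcal{S}^*$, i.e. for every pair $j\neq j'$ it contains $(j,j',y)$ with $y=1$ if $\boldsymbol{x}_j,\boldsymbol{x}_{j'}$ lie in the same cluster and $y=0$ otherwise. Suppose $\mathcal{Z}^*=\{\boldsymbol{z}_j^*\}_{j=1}^N\subset\mathbb{R}^D\setminus\{\mathbf{0}\}$ satisfies $\mathcal{L}_{\mathrm{ang}}(\mathcal{Z}^*;\mathcal{C},\omega)=0$. Then for any $\boldsymbol{x}_j\in\mathcal{S}_k^*$ and $\boldsymbol{x}_{j'}\in\mathcal{S}_{k'}^*$: $\theta_{\boldsymbol{z}_j^*,\boldsymbol{z}_{j'}^*}=0$ if $k=k'$, and $\theta_{\boldsymbol{z}_j^*,\boldsymbol{z}_{j'}^*}\ge \pi/\omega$ if $k\neq k'$.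
   Context: For nonzero $\boldsymbol{u},\boldsymbol{v}\in\mathbb{R}^D$, $\theta_{\boldsymbol{u},\boldsymbol{v}}=\arccos\big(\langle\boldsymbol{u},\boldsymbol{v}\rangle/(\|\boldsymbol{u}\|\|\boldsymbol{v}\|)\big)\in[0,\pi]$. Given constraints $\mathcal{C}=\{(a_i,b_i,y_i)\}_{i=1}^{|\mathcal{C}|}$ with $y_i\in\{0,1\}$, embeddings $\boldsymbol{z}_j$ and a factor $\omega>0$, the SpherePair loss is $\mathcal{L}_{\mathrm{ang}}=-\frac{1}{|\mathcal{C}|}\sum_{i}\big(y_i\log \mathrm{Sim}(a_i,b_i)+(1-y_i)\log(1-\mathrm{Sim}(a_i,b_i))\big)$, where $\mathrm{Sim}(a_i,b_i)=\tfrac12(\cos\theta_{\boldsymbol{z}_{a_i},\boldsymbol{z}_{b_i}}+1)$ if $y_i=1$ and $\mathrm{Sim}(a_i,b_i)=\tfrac12(\cos(\min(\omega\theta_{\boldsymbol{z}_{a_i},\boldsymbol{z}_{b_i}},\pi))+1)$ if $y_i=0$ (with the convention $\log 0=-\infty$). *)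

theory Defs
  imports "HOL-Analysis.Analysis" "HOL-Library.Extended_Real"
begin

definition ang :: "'a::euclidean_space \<Rightarrow> 'a \<Rightarrow> real" where
  "ang u v = arccos (inner u v / (norm u * norm v))"

definition eln :: "real \<Rightarrow> ereal" where
  "eln x = (if x = 0 then -\<infinity> else ereal (ln x))"

definition sim :: "real \<Rightarrow> 'a::euclidean_space \<Rightarrow> 'a \<Rightarrow> nat \<Rightarrow> real" where
  "sim \<omega> u v y = (if y = 1 then (cos (ang u v) + 1) / 2
                  else (cos (min (\<omega> * ang u v) pi) + 1) / 2)"

definition L_ang :: "(nat \<Rightarrow> 'a::euclidean_space) \<Rightarrow> (nat \<times> nat \<times> nat) set \<Rightarrow> real \<Rightarrow> ereal" where
  "L_ang z C \<omega> = - (ereal (1 / real (card C)) *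
      (\<Sum>(a, b, y)\<in>C. ereal (real y) * eln (sim \<omega> (z a) (z b) y)
                     + ereal (1 - real y) * eln (1 - sim \<omega> (z a) (z b) y)))"

definition all_constraints :: "nat \<Rightarrow> (nat \<Rightarrow> nat set) \<Rightarrow> nat \<Rightarrow> (nat \<times> nat \<times> nat) set" where
  "all_constraints N S K = {(j, j', y) | j j' y. j < N \<and> j' < N \<and> j \<noteq> j' \<and>
      y = (if (\<exists>k\<in>{1..K}. j \<in> S k \<and> j' \<in> S k) then 1 else 0)}"

definition is_partition :: "nat \<Rightarrow> (nat \<Rightarrow> nat set) \<Rightarrow> nat \<Rightarrow> bool" where
  "is_partition N S K \<longleftrightarrow> (\<Union>k\<in>{1..K}. S k) = {0..<N}
     \<and> (\<forall>k\<in>{1..K}. S k \<noteq> {})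
     \<and> (\<forall>k\<in>{1..K}. \<forall>k'\<in>{1..K}. k \<noteq> k' \<longrightarrow> S k \<inter> S k' = {})"

end

theory Submission
  imports Defs
begin

lemma sum_nonpos_zero_ereal:
  fixes f :: "'b \<Rightarrow> ereal"
  assumes "finite C" "\<forall>x\<in>C. f x \<le> 0" "sum f C = 0" "x \<in> C"
  shows "f x = 0"
proof -
  have "sum f C = f x + sum f (C - {x})" using assms by (simp add: sum.remove)
  also have "\<dots> \<le> f x + 0" using assms by (intro add_mono sum_nonpos) auto
  finally have "0 \<le> f x" using assms by simp
  thus ?thesis using assms by (meson antisym)
qed

lemma eln_nonpos: "0 \<le> x \<Longrightarrow> x \<le> 1 \<Longrightarrow> eln x \<le> 0"
  by (simp add: eln_def)

lemma eln_zero: "0 \<le> x \<Longrightarrow> x \<le> 1 \<Longrightarrow> eln x = 0 \<Longrightarrow> x = 1"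
  by (auto simp: eln_def split: if_splits)

lemma ang_range: "0 \<le> ang u v \<and> ang u v \<le> pi"
proof -
  define X where "X = inner u v / (norm u * norm v)"
  have "\<bar>inner u v / (norm u * norm v)\<bar> \<le> 1"
  proof (cases "norm u * norm v = 0")
    case False
    hence "norm u * norm v > 0" by (simp add: zero_less_mult_iff)
    moreover have "\<bar>inner u v\<bar> \<le> norm u * norm v" by (rule Cauchy_Schwarz_ineq2)
    ultimately have "\<bar>inner u v\<bar> / (norm u * norm v) \<le> 1"
      by (simp add: divide_le_eq_1_pos)
    moreover have "\<bar>inner u v / (norm u * norm v)\<bar> = \<bar>inner u v\<bar> / (norm u * norm v)"
      by (simp add: abs_divide abs_mult)
    ultimately show ?thesis by simp
  qed auto
  hence "\<bar>X\<bar> \<le> 1" unfolding X_def .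
  hence "X \<le> 1 \<and> - X \<le> 1" by (simp only: abs_le_iff)
  hence "- 1 \<le> X" "X \<le> 1" by linarith+
  hence "- 1 \<le> inner u v / (norm u * norm v)" "inner u v / (norm u * norm v) \<le> 1"
    unfolding X_def .
  thus ?thesis unfolding ang_def by (rule arccos_bounded)
qed

lemma cos_half_range:
  fixes t :: real shows "0 \<le> (cos t + 1) / 2 \<and> (cos t + 1) / 2 \<le> 1"
proof -
  have a: "0 \<le> cos t + 1" using cos_ge_minus_one[of t] by linarith
  have b: "cos t + 1 \<le> 2" using cos_le_one[of t] by linarith
  show ?thesis using a b by simp
qed

lemma sim_range: "0 \<le> sim \<omega> u v y \<and> sim \<omega> u v y \<le> 1"
  unfolding sim_def using cos_half_range by simp

theorem proposition1:
  fixes N K :: nat and S :: "nat \<Rightarrow> nat set" and \<omega> :: real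
    and z :: "nat \<Rightarrow> 'a::euclidean_space"
  assumes part: "is_partition N S K"
    and omega: "\<omega> > 0"
    and nz: "\<forall>j<N. z j \<noteq> 0"
    and loss: "L_ang z (all_constraints N S K) \<omega> = 0"
    and k: "k \<in> {1..K}" and k': "k' \<in> {1..K}"
    and j: "j \<in> S k" and j': "j' \<in> S k'"
  shows "(k = k' \<longrightarrow> ang (z j) (z j') = 0) \<and> (k \<noteq> k' \<longrightarrow> ang (z j) (z j') \<ge> pi / \<omega>)"
proof -
  define C where "C = all_constraints N S K"
  define f where "f = (\<lambda>(a, b, y). ereal (real y) * eln (sim \<omega> (z a) (z b) y)
                     + ereal (1 - real y) * eln (1 - sim \<omega> (z a) (z b) y))"
  have jN: "j < N" and j'N: "j' < N" using part j j' k k' unfolding is_partition_def by auto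
  have finC: "finite C"
  proof -
    have "C \<subseteq> {0..<N} \<times> {0..<N} \<times> {0,1}" unfolding C_def all_constraints_def by auto
    thus ?thesis by (rule finite_subset) auto
  qed
  have y01: "\<And>a b y. (a,b,y) \<in> C \<Longrightarrow> y = 0 \<or> y = 1" unfolding C_def all_constraints_def by auto
  have fnp: "\<forall>x\<in>C. f x \<le> 0"
  proof
    fix x assume "x \<in> C"
    then obtain a b y where x: "x = (a,b,y)" "(a,b,y) \<in> C" by (cases x) auto
    have "eln (sim \<omega> (z a) (z b) y) \<le> 0" "eln (1 - sim \<omega> (z a) (z b) y) \<le> 0"
      using sim_range[of \<omega> "z a" "z b" y] by (auto intro!: eln_nonpos)
    thus "f x \<le> 0" using y01[OF x(2)] x(1) unfolding f_def by (auto simp: zero_ereal_def[symmetric])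
  qed
  have uniq: "k1 = k2" if "k1 \<in> {1..K}" "k2 \<in> {1..K}" "i \<in> S k1" "i \<in> S k2" for k1 k2 i
  proof (rule ccontr)
    assume "k1 \<noteq> k2"
    hence "S k1 \<inter> S k2 = {}" using part that(1,2) unfolding is_partition_def by blast
    thus False using that(3,4) by blast
  qed
  show ?thesis
  proof (cases "j = j'")
    case True
    have "k = k'"
    proof (rule ccontr)
      assume "k \<noteq> k'"
      hence "S k \<inter> S k' = {}" using part k k' unfolding is_partition_def by auto
      thus False using j j' True by auto
    qed
    moreover have "ang (z j) (z j') = 0"
    proof -
      have "z j \<noteq> 0" using nz jN by auto
      hence "inner (z j) (z j) / (norm (z j) * norm (z j)) = 1"
        by (simp add: power2_norm_eq_inner[symmetric] power2_eq_square)
      thus ?thesis using True unfolding ang_def by simp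
    qed
    ultimately show ?thesis by simp
  next
    case False
    define y where "y = (if (\<exists>k\<in>{1..K}. j \<in> S k \<and> j' \<in> S k) then 1 else (0::nat))"
    have inC: "(j, j', y) \<in> C" unfolding C_def all_constraints_def y_def using jN j'N False by blast
    hence "C \<noteq> {}" by auto
    hence cpos: "card C > 0" using finC by (simp add: card_gt_0_iff)
    have "ereal (1 / real (card C)) * sum f C = 0"
      using loss unfolding L_ang_def C_def[symmetric] f_def by simp
    hence "sum f C = 0" using cpos by simp
    hence f0: "f (j, j', y) = 0" using sum_nonpos_zero_ereal[OF finC fnp _ inC] by simp
    have sr: "0 \<le> sim \<omega> (z j) (z j') y" "sim \<omega> (z j) (z j') y \<le> 1" using sim_range by auto
    have ar: "0 \<le> ang (z j) (z j')" "ang (z j) (z j') \<le> pi" using ang_range by auto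
    show ?thesis
    proof (cases "k = k'")
      case True
      hence y1: "y = 1" unfolding y_def using j j' k by auto
      hence "eln (sim \<omega> (z j) (z j') y) = 0" using f0 unfolding f_def by (simp add: zero_ereal_def[symmetric])
      hence "sim \<omega> (z j) (z j') y = 1" using eln_zero sr by blast
      hence "cos (ang (z j) (z j')) = 1" using y1 unfolding sim_def by simp
      hence "ang (z j) (z j') = 0" using ar
        using cos_inj_pi[of "ang (z j) (z j')" 0] by simp
      thus ?thesis using True by simp
    next
      case ne: False
      have y0: "y = 0"
      proof (rule ccontr)
        assume "y \<noteq> 0"
        then obtain k2 where k2: "k2 \<in> {1..K}" "j \<in> S k2" "j' \<in> S k2" unfolding y_def by (auto split: if_splits)
        have "k2 = k" by (rule uniq[OF k2(1) k k2(2) j])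
        moreover have "k2 = k'" by (rule uniq[OF k2(1) k' k2(3) j'])
        ultimately show False using ne by simp
      qed
      hence "eln (1 - sim \<omega> (z j) (z j') y) = 0" using f0 unfolding f_def by (simp add: zero_ereal_def[symmetric])
      hence "1 - sim \<omega> (z j) (z j') y = 1" using eln_zero[of "1 - sim \<omega> (z j) (z j') y"] sr by simp
      hence c: "cos (min (\<omega> * ang (z j) (z j')) pi) = -1" using y0 unfolding sim_def by simp
      have m: "0 \<le> min (\<omega> * ang (z j) (z j')) pi" "min (\<omega> * ang (z j) (z j')) pi \<le> pi"
        using ar omega by auto
      have "min (\<omega> * ang (z j) (z j')) pi = pi"
        using c m cos_inj_pi[of "min (\<omega> * ang (z j) (z j')) pi" pi] by simp
      hence "\<omega> * ang (z j) (z j') \<ge> pi" using min.cobounded1[of "\<omega> * ang (z j) (z j')" pi] by simp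
      hence "ang (z j) (z j') \<ge> pi / \<omega>" using omega by (simp add: pos_divide_le_eq[OF omega] mult.commute)
      thus ?thesis using ne by simp
    qed
  qed
qed

end
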